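(* Under the joint threshold-based policy with thresholds $P_S,P_D>0$ (and arbitrary dependence between the energy arrival processes at $S$ and $D$), $$\Psi(P_S,P_D)=\lim_{n\to\infty}\frac1n\sum_{t=1}^n\mathbf{E}\big[\mathbf{1}_{B_S^t\ge P_S,\;B_D^t\ge P_D}\big]=\min\Big(1,\frac{\lambda_S}{P_S},\frac{\lambda_D}{P_D}\Big).$$
   Context: Time slotted, $t=1,2,\dots$ (energy and power identified). $S$ and $D$ harvest $E_S^t,E_D^t\ge0$ at the end of slot $t$; $\{E_S^t\},\{E_D^t\}$ stationary ergodic with means $\lambda_S,\lambda_D>0$. Infinite batteries, $B_S^1=B_D^1=0$. Joint threshold-based policy: each node knows whether the other node will transmit/receive in the current slot; both act only when $B_S^t\ge P_S$ and $B_D^t\ge P_D$, i.e. for $\beta\in\{S,D\}$, $$B_\beta^{t+1}=B_\beta^t-P_\beta\,\mathbf{1}_{B_S^t\ge P_S,\,B_D^t\ge P_D}+E_\beta^t.$$ *)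

theory Defs
  imports "HOL-Probability.Probability"
begin

definition seq_shift :: "(nat \<Rightarrow> real) \<Rightarrow> (nat \<Rightarrow> real)" where
  "seq_shift x = (\<lambda>t. x (Suc t))"

abbreviation seq_space :: "(nat \<Rightarrow> real) measure" where
  "seq_space \<equiv> (\<Pi>\<^sub>M t\<in>UNIV. (borel :: real measure))"

text \<open>Strict-sense stationarity of a real-valued random process X (X t is the value in slot t+1):
  each X t is a random variable and the law of the shifted process equals the law of the process.\<close>
definition stationary_process :: "'a measure \<Rightarrow> (nat \<Rightarrow> 'a \<Rightarrow> real) \<Rightarrow> bool" where
  "stationary_process M X \<longleftrightarrow>
     (\<forall>t. X t \<in> borel_measurable M) \<and>
     (\<forall>k. distr M seq_space (\<lambda>\<omega> t. X (t + k) \<omega>) = distr M seq_space (\<lambda>\<omega> t. X t \<omega>))"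

definition ergodic_process :: "'a measure \<Rightarrow> (nat \<Rightarrow> 'a \<Rightarrow> real) \<Rightarrow> bool" where
  "ergodic_process M X \<longleftrightarrow>
     (\<forall>A \<in> sets seq_space.
        (\<forall>x \<in> space seq_space. seq_shift x \<in> A \<longleftrightarrow> x \<in> A) \<longrightarrow>
        measure M {\<omega> \<in> space M. (\<lambda>t. X t \<omega>) \<in> A} \<in> {0, 1})"

text \<open>Battery levels under the joint threshold policy.  batteries PS PD ES ED n = (B_S^{n+1}, B_D^{n+1}),
  where ES n, ED n are the energies harvested at the end of slot n+1.\<close>
fun batteries :: "real \<Rightarrow> real \<Rightarrow> (nat \<Rightarrow> real) \<Rightarrow> (nat \<Rightarrow> real) \<Rightarrow> nat \<Rightarrow> real \<times> real" where
  "batteries PS PD ES ED 0 = (0, 0)"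
| "batteries PS PD ES ED (Suc n) =
     (let (bS, bD) = batteries PS PD ES ED n;
          a = (if bS \<ge> PS \<and> bD \<ge> PD then 1 else 0)
      in (bS - PS * a + ES n, bD - PD * a + ED n))"

definition active :: "real \<Rightarrow> real \<Rightarrow> (nat \<Rightarrow> real) \<Rightarrow> (nat \<Rightarrow> real) \<Rightarrow> nat \<Rightarrow> real" where
  "active PS PD ES ED n =
     (if fst (batteries PS PD ES ED n) \<ge> PS \<and> snd (batteries PS PD ES ED n) \<ge> PD then 1 else 0)"

end

theory Submission
  imports Defs
begin

lemma space_seq: "space seq_space = UNIV"
  by (simp add: space_PiM)

lemma path_meas:
  assumes "\<And>t. X t \<in> borel_measurable M"
  shows "(\<lambda>\<omega> t. X (t + k) \<omega>) \<in> measurable M seq_space"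
  by (rule measurable_PiM_single') (auto simp: assms)

lemma path_meas0:
  assumes "\<And>t. X t \<in> borel_measurable M"
  shows "(\<lambda>\<omega> t. X t \<omega>) \<in> measurable M seq_space"
  by (rule measurable_PiM_single') (auto simp: assms)

definition Aset :: "real \<Rightarrow> (nat \<Rightarrow> real) set" where
  "Aset c = {x. \<exists>k::nat. \<forall>N. \<exists>n\<ge>N. (\<Sum>t<n. x t) < (c - 1/real (Suc k)) * real n}"

lemma Aset_meas: "Aset c \<in> sets seq_space"
proof -
  have "Measurable.pred seq_space (\<lambda>x. \<exists>k::nat. \<forall>N::nat. \<exists>n\<ge>N. (\<Sum>t<n. x t) < (c - 1/real (Suc k)) * real n)"
    by measurable
  then show ?thesis unfolding pred_def Aset_def space_seq by simp
qed

lemma sum_shift: "(\<Sum>t<Suc n. x t) = x 0 + (\<Sum>t<n. seq_shift x t)"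
  unfolding seq_shift_def by (rule sum.lessThan_Suc_shift)

lemma Aset_shift: "seq_shift x \<in> Aset c \<longleftrightarrow> x \<in> Aset c"
proof
  assume "seq_shift x \<in> Aset c"
  then obtain k where k: "\<And>N. \<exists>n\<ge>N. (\<Sum>t<n. seq_shift x t) < (c - 1/real (Suc k)) * real n"
    unfolding Aset_def by auto
  define d where "d = c - 1/real (Suc k)"
  define d' where "d' = c - 1/real (Suc (2*k+1))"
  have e2: "real (Suc (2*k+1)) = 2 * real (Suc k)" by simp
  have gq: "\<And>q::real. q > 0 \<Longrightarrow> (c - 1/(2*q)) - (c - 1/q) = 1/(2*q)" by (simp add: field_simps)
  have gap: "d' - d = 1/real (Suc (2*k+1))" unfolding d_def d'_def e2 by (rule gq) simp
  have gp: "d' - d > 0" unfolding gap by simp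
  obtain N1 :: nat where N1: "x 0 - d' < (d' - d) * real N1"
    using reals_Archimedean3[OF gp] by (metis mult.commute)
  show "x \<in> Aset c" unfolding Aset_def
  proof (rule CollectI, rule exI[of _ "2*k+1"], rule allI)
    fix N
    obtain n where n: "n \<ge> max N N1" "(\<Sum>t<n. seq_shift x t) < d * real n"
      using k[of "max N N1"] unfolding d_def by blast
    have "(d' - d) * real N1 \<le> (d' - d) * real n" using n gp by (intro mult_left_mono) auto
    then have "(\<Sum>t<Suc n. x t) < d' * real (Suc n)"
      using n N1 unfolding sum_shift by (simp add: algebra_simps)
    then show "\<exists>n\<ge>N. (\<Sum>t<n. x t) < (c - 1/real (Suc (2*k+1))) * real n"
      using n unfolding d'_def by (intro exI[of _ "Suc n"]) auto
  qed
next
  assume "x \<in> Aset c"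
  then obtain k where k: "\<And>N. \<exists>n\<ge>N. (\<Sum>t<n. x t) < (c - 1/real (Suc k)) * real n"
    unfolding Aset_def by auto
  define d where "d = c - 1/real (Suc k)"
  define d' where "d' = c - 1/real (Suc (2*k+1))"
  have e2: "real (Suc (2*k+1)) = 2 * real (Suc k)" by simp
  have gq: "\<And>q::real. q > 0 \<Longrightarrow> (c - 1/(2*q)) - (c - 1/q) = 1/(2*q)" by (simp add: field_simps)
  have gap: "d' - d = 1/real (Suc (2*k+1))" unfolding d_def d'_def e2 by (rule gq) simp
  have gp: "d' - d > 0" unfolding gap by simp
  obtain N1 :: nat where N1: "d - x 0 < (d' - d) * real N1"
    using reals_Archimedean3[OF gp] by (metis mult.commute)
  show "seq_shift x \<in> Aset c" unfolding Aset_def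
  proof (rule CollectI, rule exI[of _ "2*k+1"], rule allI)
    fix N
    obtain n where n: "n \<ge> Suc (max N N1)" "(\<Sum>t<n. x t) < d * real n"
      using k[of "Suc (max N N1)"] unfolding d_def by blast
    then obtain m where m: "n = Suc m" "m \<ge> max N N1" by (cases n) auto
    have "(d' - d) * real N1 \<le> (d' - d) * real m" using m gp by (intro mult_left_mono) auto
    then have "(\<Sum>t<m. seq_shift x t) < d' * real m"
      using n N1 unfolding m sum_shift by (simp add: algebra_simps)
    then show "\<exists>n\<ge>N. (\<Sum>t<n. seq_shift x t) < (c - 1/real (Suc (2*k+1))) * real n"
      using m unfolding d'_def by (intro exI[of _ m]) auto
  qed
qed

fun Mx :: "real \<Rightarrow> (nat \<Rightarrow> real) \<Rightarrow> nat \<Rightarrow> real" where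
  "Mx c x 0 = 0"
| "Mx c x (Suc n) = max (Mx c x n) (\<Sum>t<Suc n. c - x t)"

lemma Mx_meas[measurable]: "(\<lambda>x. Mx c x n) \<in> borel_measurable seq_space"
  by (induction n) auto

lemma Mx_ge0: "Mx c x n \<ge> 0"
  by (induction n) auto

lemma Mx_ge: "k \<le> n \<Longrightarrow> (\<Sum>t<k. c - x t) \<le> Mx c x n"
proof (induction n)
  case 0 then show ?case by simp
next
  case (Suc n) then show ?case by (cases "k = Suc n") (auto simp: le_Suc_eq)
qed

lemma Mx_att: "\<exists>k\<le>n. Mx c x n = (\<Sum>t<k. c - x t)"
proof (induction n)
  case 0 then show ?case by (intro exI[of _ 0]) auto
next
  case (Suc n)
  then obtain k where "k \<le> n" "Mx c x n = (\<Sum>t<k. c - x t)" by blast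
  then show ?case by (cases "Mx c x n \<le> (\<Sum>t<Suc n. c - x t)")
     (auto simp: max_def intro: exI[of _ "Suc n"] exI[of _ k] simp del: sum.lessThan_Suc)
qed

lemma Mx_mono: "m \<le> n \<Longrightarrow> Mx c x m \<le> Mx c x n"
proof (induction n)
  case 0 then show ?case by simp
next
  case (Suc n) then show ?case by (cases "m = Suc n") (auto simp: le_Suc_eq)
qed

lemma Mx_key: "Mx c x n > 0 \<Longrightarrow> Mx c x n \<le> (c - x 0) + Mx c (seq_shift x) n"
proof -
  assume pos: "Mx c x n > 0"
  obtain k where k: "k \<le> n" "Mx c x n = (\<Sum>t<k. c - x t)" using Mx_att by blast
  then obtain j where j: "k = Suc j" using pos by (cases k) auto
  have "(\<Sum>t<k. c - x t) = (c - x 0) + (\<Sum>t<j. c - seq_shift x t)"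
    unfolding j seq_shift_def by (rule sum.lessThan_Suc_shift)
  also have "(\<Sum>t<j. c - seq_shift x t) \<le> Mx c (seq_shift x) n" using k j by (intro Mx_ge) auto
  finally show ?thesis using k by simp
qed

lemma Mx_pw: "(c - x 0) * (if Mx c x n > 0 then 1 else 0) \<ge> Mx c x n - Mx c (seq_shift x) n"
  using Mx_key[of c x n] Mx_ge0[of c "seq_shift x" n] Mx_ge0[of c x n] by auto

lemma integral_shift:
  fixes G :: "(nat \<Rightarrow> real) \<Rightarrow> real"
  assumes st: "stationary_process M X" and G: "G \<in> borel_measurable seq_space"
  shows "(\<integral>\<omega>. G (\<lambda>t. X (t + k) \<omega>) \<partial>M) = (\<integral>\<omega>. G (\<lambda>t. X t \<omega>) \<partial>M)"
proof -
  have m: "\<And>t. X t \<in> borel_measurable M" using st unfolding stationary_process_def by blast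
  have "(\<integral>\<omega>. G (\<lambda>t. X (t + k) \<omega>) \<partial>M) = integral\<^sup>L (distr M seq_space (\<lambda>\<omega> t. X (t + k) \<omega>)) G"
    by (rule integral_distr[symmetric, OF path_meas[of X M k, OF m] G])
  also have "\<dots> = integral\<^sup>L (distr M seq_space (\<lambda>\<omega> t. X t \<omega>)) G"
    using st unfolding stationary_process_def by metis
  also have "\<dots> = (\<integral>\<omega>. G (\<lambda>t. X t \<omega>) \<partial>M)" by (rule integral_distr[OF path_meas0[of X M, OF m] G])
  finally show ?thesis .
qed

lemma integrable_shift:
  fixes G :: "(nat \<Rightarrow> real) \<Rightarrow> real"
  assumes st: "stationary_process M X" and G: "G \<in> borel_measurable seq_space"
  shows "integrable M (\<lambda>\<omega>. G (\<lambda>t. X (t + k) \<omega>)) \<longleftrightarrow> integrable M (\<lambda>\<omega>. G (\<lambda>t. X t \<omega>))"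
proof -
  have m: "\<And>t. X t \<in> borel_measurable M" using st unfolding stationary_process_def by blast
  have "integrable M (\<lambda>\<omega>. G (\<lambda>t. X (t + k) \<omega>)) \<longleftrightarrow> integrable (distr M seq_space (\<lambda>\<omega> t. X (t + k) \<omega>)) G"
    by (rule integrable_distr_eq[symmetric, OF path_meas[of X M k, OF m] G])
  also have "\<dots> \<longleftrightarrow> integrable (distr M seq_space (\<lambda>\<omega> t. X t \<omega>)) G"
    using st unfolding stationary_process_def by metis
  also have "\<dots> \<longleftrightarrow> integrable M (\<lambda>\<omega>. G (\<lambda>t. X t \<omega>))" by (rule integrable_distr_eq[OF path_meas0[of X M, OF m] G])
  finally show ?thesis .
qed

lemma X_int:
  assumes st: "stationary_process M X" and i0: "integrable M (X 0)"
  shows "integrable M (X t)" "integral\<^sup>L M (X t) = integral\<^sup>L M (X 0)"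
proof -
  have G: "(\<lambda>x::nat\<Rightarrow>real. x 0) \<in> borel_measurable seq_space" by measurable
  show "integrable M (X t)" using integrable_shift[OF st G, of t] i0 by simp
  show "integral\<^sup>L M (X t) = integral\<^sup>L M (X 0)" using integral_shift[OF st G, of t] by simp
qed

lemma ergodic_lower:
  fixes M :: "'a measure" and X :: "nat \<Rightarrow> 'a \<Rightarrow> real"
  assumes P: "prob_space M" and st: "stationary_process M X" and erg: "ergodic_process M X"
    and int0: "integrable M (X 0)" and b: "b < integral\<^sup>L M (X 0)"
  shows "AE \<omega> in M. \<exists>N. \<forall>n\<ge>N. b * real n \<le> (\<Sum>t<n. X t \<omega>)"
proof -
  interpret prob_space M by (rule P)
  have m[measurable]: "\<And>t. X t \<in> borel_measurable M" using st unfolding stationary_process_def by blast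
  have intX: "\<And>t. integrable M (X t)" using X_int[OF st int0] by blast
  have Mm[measurable]: "\<And>c n. (\<lambda>\<omega>. Mx c (\<lambda>t. X t \<omega>) n) \<in> borel_measurable M"
    using measurable_compose[OF path_meas0[of X M, OF m] Mx_meas] by simp
  define lam where "lam = integral\<^sup>L M (X 0)"
  define c where "c = (b + lam)/2"
  have bc: "b < c" "c < lam" using b unfolding c_def lam_def by auto
  define E where "E = {\<omega> \<in> space M. (\<lambda>t. X t \<omega>) \<in> Aset c}"
  have "(\<lambda>\<omega> t. X t \<omega>) -` Aset c \<inter> space M \<in> sets M"
    by (rule measurable_sets[OF path_meas0[of X M, OF m] Aset_meas])
  moreover have "E = (\<lambda>\<omega> t. X t \<omega>) -` Aset c \<inter> space M" unfolding E_def by auto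
  ultimately have Em: "E \<in> sets M" by simp
  have inv: "\<And>x. x \<in> space seq_space \<Longrightarrow> seq_shift x \<in> Aset c \<longleftrightarrow> x \<in> Aset c" by (rule Aset_shift)
  have E01: "measure M E \<in> {0,1}"
    using erg[unfolded ergodic_process_def, rule_format, OF Aset_meas[of c] inv] unfolding E_def .
  have "measure M E \<noteq> 1"
  proof
    assume E1: "measure M E = 1"
    then have AE: "AE \<omega> in M. \<omega> \<in> E" by (rule AE_prob_1)
    define f where "f \<omega> = c - X 0 \<omega>" for \<omega>
    define s where "s n \<omega> = f \<omega> * (if Mx c (\<lambda>t. X t \<omega>) n > 0 then 1 else 0)" for n \<omega>
    have fint: "integrable M f" unfolding f_def using int0 by auto
    have fm[measurable]: "f \<in> borel_measurable M" unfolding f_def by measurable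
    have Mint: "integrable M (\<lambda>\<omega>. Mx c (\<lambda>t. X t \<omega>) n)" for n
      by (induction n) (auto intro!: integrable_max integrable_sum integrable_diff intX simp del: sum.lessThan_Suc)
    have Mint1: "integrable M (\<lambda>\<omega>. Mx c (\<lambda>t. X (t + 1) \<omega>) n)" for n
      using integrable_shift[OF st Mx_meas[of c n], of 1] Mint[of n] by simp
    have sm[measurable]: "s n \<in> borel_measurable M" for n unfolding s_def by measurable
    have sint: "integrable M (s n)" for n
      by (rule Bochner_Integration.integrable_bound[OF fint sm]) (auto simp: s_def)
    have s_ge: "integral\<^sup>L M (s n) \<ge> 0" for n
    proof -
      have pw: "Mx c (\<lambda>t. X t \<omega>) n - Mx c (\<lambda>t. X (t+1) \<omega>) n \<le> s n \<omega>" for \<omega>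
        using Mx_pw[of c "\<lambda>t. X t \<omega>" n] unfolding s_def f_def seq_shift_def by simp
      have "0 = (\<integral>\<omega>. Mx c (\<lambda>t. X t \<omega>) n \<partial>M) - (\<integral>\<omega>. Mx c (\<lambda>t. X (t+1) \<omega>) n \<partial>M)"
        using integral_shift[OF st Mx_meas[of c n], of 1] by simp
      also have "\<dots> = (\<integral>\<omega>. Mx c (\<lambda>t. X t \<omega>) n - Mx c (\<lambda>t. X (t+1) \<omega>) n \<partial>M)"
        by (rule Bochner_Integration.integral_diff[symmetric, OF Mint Mint1])
      also have "\<dots> \<le> integral\<^sup>L M (s n)"
        by (rule integral_mono[OF Bochner_Integration.integrable_diff[OF Mint Mint1] sint pw])
      finally show ?thesis .
    qed
    have lim: "(\<lambda>n. integral\<^sup>L M (s n)) \<longlonglongrightarrow> integral\<^sup>L M f"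
    proof (rule integral_dominated_convergence[where w = "\<lambda>\<omega>. norm (f \<omega>)"])
      show "f \<in> borel_measurable M" by measurable
      show "\<And>n. s n \<in> borel_measurable M" by measurable
      show "integrable M (\<lambda>\<omega>. norm (f \<omega>))" using fint by auto
      show "\<And>n. AE \<omega> in M. norm (s n \<omega>) \<le> norm (f \<omega>)" unfolding s_def by auto
      show "AE \<omega> in M. (\<lambda>n. s n \<omega>) \<longlonglongrightarrow> f \<omega>"
        using AE
      proof eventually_elim
        fix \<omega> assume "\<omega> \<in> E"
        then have "(\<lambda>t. X t \<omega>) \<in> Aset c" unfolding E_def by auto
        then obtain k where k: "\<And>N. \<exists>n\<ge>N. (\<Sum>t<n. X t \<omega>) < (c - 1/real (Suc k)) * real n"
          unfolding Aset_def by auto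
        obtain n where n: "n \<ge> 1" "(\<Sum>t<n. X t \<omega>) < (c - 1/real (Suc k)) * real n"
          using k[of 1] by auto
        have le: "(c - 1/real (Suc k)) * real n \<le> c * real n"
          by (simp add: algebra_simps)
        have "(\<Sum>t<n. c - X t \<omega>) = c * real n - (\<Sum>t<n. X t \<omega>)" by (simp add: sum_subtractf)
        then have "0 < (\<Sum>t<n. c - X t \<omega>)" using n(2) le by linarith
        then have pos: "Mx c (\<lambda>t. X t \<omega>) m > 0" if "m \<ge> n" for m
          using Mx_ge[of n n c "\<lambda>t. X t \<omega>"] Mx_mono[OF that, of c "\<lambda>t. X t \<omega>"] by simp
        have "eventually (\<lambda>m. s m \<omega> = f \<omega>) sequentially"
          using pos unfolding s_def eventually_sequentially by auto
        then show "(\<lambda>m. s m \<omega>) \<longlonglongrightarrow> f \<omega>" by (rule tendsto_eventually)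
      qed
    qed
    have "integral\<^sup>L M f = c - lam" unfolding f_def lam_def
      by (subst Bochner_Integration.integral_diff) (auto simp: int0 prob_space)
    then have "integral\<^sup>L M f < 0" using bc by simp
    moreover have "integral\<^sup>L M f \<ge> 0"
      by (rule LIMSEQ_le_const[OF lim]) (use s_ge in auto)
    ultimately show False by simp
  qed
  with E01 have E0: "measure M E = 0" by auto
  have Enull: "E \<in> null_sets M" using Em E0 by (simp add: emeasure_eq_measure null_setsI)
  show ?thesis
  proof (rule AE_I'[OF Enull])
    obtain k where kk: "inverse (real (Suc k)) < c - b" using reals_Archimedean[of "c - b"] bc by auto
    then have bk: "b \<le> c - 1/real (Suc k)" by (simp add: inverse_eq_divide)
    show "{\<omega> \<in> space M. \<not> (\<exists>N. \<forall>n\<ge>N. b * real n \<le> (\<Sum>t<n. X t \<omega>))} \<subseteq> E"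
    proof safe
      fix \<omega> assume om: "\<omega> \<in> space M" and nn: "\<not> (\<exists>N. \<forall>n\<ge>N. b * real n \<le> (\<Sum>t<n. X t \<omega>))"
      have "\<forall>N. \<exists>n\<ge>N. (\<Sum>t<n. X t \<omega>) < (c - 1/real (Suc k)) * real n"
      proof
        fix N
        obtain n where "n \<ge> N" "(\<Sum>t<n. X t \<omega>) < b * real n" using nn by (auto simp: not_le)
        moreover have "b * real n \<le> (c - 1/real (Suc k)) * real n" using bk by (intro mult_right_mono) auto
        ultimately show "\<exists>n\<ge>N. (\<Sum>t<n. X t \<omega>) < (c - 1/real (Suc k)) * real n" by auto
      qed
      then show "\<omega> \<in> E" unfolding E_def Aset_def using om by auto
    qed
  qed
qed

lemma bat_Suc: "batteries PS PD e d (Suc n) =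
  (fst (batteries PS PD e d n) - PS * active PS PD e d n + e n,
   snd (batteries PS PD e d n) - PD * active PS PD e d n + d n)"
  by (simp add: active_def split_beta Let_def)

lemma active_bounds: "0 \<le> active PS PD e d n" "active PS PD e d n \<le> 1"
  by (auto simp: active_def)

lemma bat_formula: "batteries PS PD e d n =
  ((\<Sum>t<n. e t) - PS * (\<Sum>t<n. active PS PD e d t),
   (\<Sum>t<n. d t) - PD * (\<Sum>t<n. active PS PD e d t))"
proof (induction n)
  case 0 show ?case by simp
next
  case (Suc n) show ?case unfolding bat_Suc Suc.IH by (simp add: algebra_simps)
qed

lemma bat_nonneg:
  assumes "\<And>t. e t \<ge> 0" "\<And>t. d t \<ge> 0"
  shows "fst (batteries PS PD e d n) \<ge> 0 \<and> snd (batteries PS PD e d n) \<ge> 0"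
proof (induction n)
  case 0 show ?case by simp
next
  case (Suc n)
  have "e n \<ge> 0" "d n \<ge> 0" using assms by auto
  then show ?case using Suc.IH unfolding bat_Suc active_def by auto
qed

lemma N_le:
  assumes "\<And>t. e t \<ge> 0" "\<And>t. d t \<ge> 0"
  shows "PS * (\<Sum>t<n. active PS PD e d t) \<le> (\<Sum>t<n. e t)"
    and "PD * (\<Sum>t<n. active PS PD e d t) \<le> (\<Sum>t<n. d t)"
  using bat_nonneg[OF assms, where PS=PS and PD=PD and n=n] unfolding bat_formula by auto

lemma det_lower:
  fixes e d :: "nat \<Rightarrow> real"
  assumes PS: "PS > 0" and PD: "PD > 0" and r0: "0 \<le> \<rho>" and r1: "\<rho> \<le> 1"
    and Te: "\<forall>t\<ge>T. \<rho> * PS * real t \<le> (\<Sum>s<t. e s)"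
    and Td: "\<forall>t\<ge>T. \<rho> * PD * real t \<le> (\<Sum>s<t. d s)"
  shows "\<rho> * real n - (1 + \<rho> * real (Suc T)) \<le> (\<Sum>t<n. active PS PD e d t)"
proof -
  define N where "N n = (\<Sum>t<n. active PS PD e d t)" for n
  define T0 where "T0 = Suc T"
  have N0: "N n \<ge> 0" for n unfolding N_def by (intro sum_nonneg) (simp add: active_def)
  have rT: "\<rho> \<le> \<rho> * real (Suc T)" using r0 by (simp add: algebra_simps)
  have main: "\<rho> * real n - (1 + \<rho> * real (Suc T)) \<le> N n"
  proof (cases "n \<le> T0")
    case True
    then have "\<rho> * real n \<le> \<rho> * real T0" using r0 by (intro mult_left_mono) auto
    then show ?thesis using N0[of n] unfolding T0_def by linarith
  next
    case False
    then have "T0 \<le> n" by simp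
    then show ?thesis
    proof (induction n rule: dec_induct)
      case base show ?case using N0[of T0] unfolding T0_def by simp
    next
      case (step t)
      have tT: "t \<ge> T" using step unfolding T0_def by auto
      show ?case
      proof (cases "active PS PD e d t = 1")
        case True
        then have "N (Suc t) = N t + 1" unfolding N_def by simp
        then show ?thesis using step.IH r1 by (simp add: ring_distribs)
      next
        case False
        then have ina: "\<not> (fst (batteries PS PD e d t) \<ge> PS \<and> snd (batteries PS PD e d t) \<ge> PD)"
          and a0: "active PS PD e d t = 0" unfolding active_def by (auto split: if_splits)
        have "\<rho> * real t < N t + 1"
        proof (cases "fst (batteries PS PD e d t) < PS")
          case True
          then have "(\<Sum>s<t. e s) - PS * N t < PS" unfolding N_def using bat_formula[of PS PD e d t] by simp
          moreover have "\<rho> * PS * real t \<le> (\<Sum>s<t. e s)" using Te tT by auto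
          ultimately have "PS * (\<rho> * real t) < PS * (N t + 1)" by (simp add: algebra_simps)
          then show ?thesis using PS by simp
        next
          case False
          then have "snd (batteries PS PD e d t) < PD" using ina by auto
          then have "(\<Sum>s<t. d s) - PD * N t < PD" unfolding N_def using bat_formula[of PS PD e d t] by simp
          moreover have "\<rho> * PD * real t \<le> (\<Sum>s<t. d s)" using Td tT by auto
          ultimately have "PD * (\<rho> * real t) < PD * (N t + 1)" by (simp add: algebra_simps)
          then show ?thesis using PD by simp
        qed
        moreover have "N (Suc t) = N t" unfolding N_def using a0 by simp
        ultimately show ?thesis using rT by (simp add: algebra_simps)
      qed
    qed
  qed
  then show ?thesis unfolding N_def .
qed

theorem proposition1:
  fixes M :: "'a measure"
    and ES ED :: "nat \<Rightarrow> 'a \<Rightarrow> real"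
    and PS PD lamS lamD :: real
  assumes "prob_space M"
    and "stationary_process M ES" and "ergodic_process M ES"
    and "stationary_process M ED" and "ergodic_process M ED"
    and "\<And>t \<omega>. \<omega> \<in> space M \<Longrightarrow> ES t \<omega> \<ge> 0"
    and "\<And>t \<omega>. \<omega> \<in> space M \<Longrightarrow> ED t \<omega> \<ge> 0"
    and "integrable M (ES 0)" and "prob_space.expectation M (ES 0) = lamS"
    and "integrable M (ED 0)" and "prob_space.expectation M (ED 0) = lamD"
    and "lamS > 0" and "lamD > 0"
    and "PS > 0" and "PD > 0"
  shows "(\<lambda>n. (\<Sum>t<n. prob_space.expectation M
                  (\<lambda>\<omega>. active PS PD (\<lambda>k. ES k \<omega>) (\<lambda>k. ED k \<omega>) t)) / real n)
           \<longlonglongrightarrow> min 1 (min (lamS / PS) (lamD / PD))"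
proof -
  note P = assms(1) and stS = assms(2) and ergS = assms(3) and stD = assms(4) and ergD = assms(5)
    and nnS = assms(6) and nnD = assms(7) and intS = assms(8) and eS = assms(9)
    and intD = assms(10) and eD = assms(11) and lS = assms(12) and lD = assms(13)
    and PS = assms(14) and PD = assms(15)
  interpret prob_space M by (rule P)
  have mS[measurable]: "\<And>t. ES t \<in> borel_measurable M" using stS unfolding stationary_process_def by blast
  have mD[measurable]: "\<And>t. ED t \<in> borel_measurable M" using stD unfolding stationary_process_def by blast
  define act where "act \<omega> t = active PS PD (\<lambda>k. ES k \<omega>) (\<lambda>k. ED k \<omega>) t" for \<omega> t
  define r where "r = min 1 (min (lamS / PS) (lamD / PD))"
  have r0: "r > 0" unfolding r_def using lS lD PS PD by simp
  have r1: "r \<le> 1" "r \<le> lamS / PS" "r \<le> lamD / PD" unfolding r_def by auto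
  have bm: "(\<lambda>\<omega>. fst (batteries PS PD (\<lambda>k. ES k \<omega>) (\<lambda>k. ED k \<omega>) n)) \<in> borel_measurable M \<and>
            (\<lambda>\<omega>. snd (batteries PS PD (\<lambda>k. ES k \<omega>) (\<lambda>k. ED k \<omega>) n)) \<in> borel_measurable M" for n
  proof (induction n)
    case 0 show ?case by simp
  next
    case (Suc n)
    then have [measurable]: "(\<lambda>\<omega>. fst (batteries PS PD (\<lambda>k. ES k \<omega>) (\<lambda>k. ED k \<omega>) n)) \<in> borel_measurable M"
      "(\<lambda>\<omega>. snd (batteries PS PD (\<lambda>k. ES k \<omega>) (\<lambda>k. ED k \<omega>) n)) \<in> borel_measurable M" by auto
    show ?case unfolding bat_Suc active_def by measurable
  qed
  have am[measurable]: "(\<lambda>\<omega>. act \<omega> t) \<in> borel_measurable M" for t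
  proof -
    from bm[of t] have [measurable]: "(\<lambda>\<omega>. fst (batteries PS PD (\<lambda>k. ES k \<omega>) (\<lambda>k. ED k \<omega>) t)) \<in> borel_measurable M"
      "(\<lambda>\<omega>. snd (batteries PS PD (\<lambda>k. ES k \<omega>) (\<lambda>k. ED k \<omega>) t)) \<in> borel_measurable M" by auto
    show ?thesis unfolding act_def active_def by measurable
  qed
  have a01: "0 \<le> act \<omega> t" "act \<omega> t \<le> 1" for \<omega> t unfolding act_def using active_bounds by auto
  have aint: "integrable M (\<lambda>\<omega>. act \<omega> t)" for t
    by (rule integrable_const_bound[where B=1]) (use a01 in auto)
  have Nm[measurable]: "(\<lambda>\<omega>. (\<Sum>t<n. act \<omega> t)) \<in> borel_measurable M" for n by measurable
  have Nint: "integrable M (\<lambda>\<omega>. (\<Sum>t<n. act \<omega> t))" for n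
    using Bochner_Integration.integrable_sum[where I="{..<n}" and M=M and f="\<lambda>t \<omega>. act \<omega> t"] aint by simp
  have avg_eq: "(\<Sum>t<n. \<integral>\<omega>. act \<omega> t \<partial>M) = (\<integral>\<omega>. (\<Sum>t<n. act \<omega> t) \<partial>M)" for n
    by (rule Bochner_Integration.integral_sum[symmetric]) (rule aint)
  have EES: "(\<integral>\<omega>. (\<Sum>t<n. ES t \<omega>) \<partial>M) = real n * lamS" for n
  proof -
    have "(\<integral>\<omega>. (\<Sum>t<n. ES t \<omega>) \<partial>M) = (\<Sum>t<n. integral\<^sup>L M (ES t))"
      by (rule Bochner_Integration.integral_sum) (use X_int[OF stS intS] in auto)
    also have "\<dots> = real n * lamS" using X_int(2)[OF stS intS] eS by simp
    finally show ?thesis .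
  qed
  have EED: "(\<integral>\<omega>. (\<Sum>t<n. ED t \<omega>) \<partial>M) = real n * lamD" for n
  proof -
    have "(\<integral>\<omega>. (\<Sum>t<n. ED t \<omega>) \<partial>M) = (\<Sum>t<n. integral\<^sup>L M (ED t))"
      by (rule Bochner_Integration.integral_sum) (use X_int[OF stD intD] in auto)
    also have "\<dots> = real n * lamD" using X_int(2)[OF stD intD] eD by simp
    finally show ?thesis .
  qed
  have Nle: "PS * (\<Sum>t<n. act \<omega> t) \<le> (\<Sum>t<n. ES t \<omega>)" "PD * (\<Sum>t<n. act \<omega> t) \<le> (\<Sum>t<n. ED t \<omega>)"
    if "\<omega> \<in> space M" for \<omega> n
    unfolding act_def using N_le[where e="\<lambda>k. ES k \<omega>" and d="\<lambda>k. ED k \<omega>" and PS=PS and PD=PD and n=n] nnS nnD that by auto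
  have U: "(\<Sum>t<n. \<integral>\<omega>. act \<omega> t \<partial>M) / real n \<le> r" for n
  proof (cases "n = 0")
    case True then show ?thesis using r0 by simp
  next
    case False
    define S where "S = (\<integral>\<omega>. (\<Sum>t<n. act \<omega> t) \<partial>M)"
    have sbnd: "(\<Sum>t<n. act \<omega> t) \<le> real n" for \<omega>
      using sum_mono[of "{..<n}" "\<lambda>t. act \<omega> t" "\<lambda>_. 1"] a01 by simp
    have "S \<le> (\<integral>\<omega>. real n \<partial>M)" unfolding S_def
      by (rule integral_mono[OF Nint]) (use sbnd in auto)
    then have S1: "S \<le> real n" by (simp add: prob_space)
    have "PS * S = (\<integral>\<omega>. PS * (\<Sum>t<n. act \<omega> t) \<partial>M)" unfolding S_def by simp
    also have "\<dots> \<le> (\<integral>\<omega>. (\<Sum>t<n. ES t \<omega>) \<partial>M)"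
      by (rule integral_mono) (use Nint X_int[OF stS intS] Nle in auto)
    finally have S2: "PS * S \<le> real n * lamS" unfolding EES .
    have "PD * S = (\<integral>\<omega>. PD * (\<Sum>t<n. act \<omega> t) \<partial>M)" unfolding S_def by simp
    also have "\<dots> \<le> (\<integral>\<omega>. (\<Sum>t<n. ED t \<omega>) \<partial>M)"
      by (rule integral_mono) (use Nint X_int[OF stD intD] Nle in auto)
    finally have S3: "PD * S \<le> real n * lamD" unfolding EED .
    have np: "real n > 0" using False by simp
    have "S / real n \<le> 1" using S1 np by simp
    moreover have "S / real n \<le> lamS / PS" using S2 np PS by (simp add: field_simps)
    moreover have "S / real n \<le> lamD / PD" using S3 np PD by (simp add: field_simps)
    ultimately show ?thesis unfolding avg_eq S_def[symmetric] r_def by simp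
  qed
  define h where "h n \<omega> = min ((\<Sum>t<n. act \<omega> t) / real n) r" for n \<omega>
  have hm[measurable]: "h n \<in> borel_measurable M" for n unfolding h_def by measurable
  have hb: "0 \<le> h n \<omega>" "h n \<omega> \<le> r" for n \<omega>
    unfolding h_def using r0 a01 by (auto intro!: divide_nonneg_nonneg sum_nonneg)
  have hint: "integrable M (h n)" for n
    by (rule integrable_const_bound[where B=r]) (use hb in auto)
  have AES: "AE \<omega> in M. \<forall>k::nat. \<exists>N. \<forall>n\<ge>N. (lamS - 1/real (Suc k)) * real n \<le> (\<Sum>t<n. ES t \<omega>)"
    unfolding AE_all_countable by (intro allI ergodic_lower[OF P stS ergS intS]) (simp add: eS)
  have AED: "AE \<omega> in M. \<forall>k::nat. \<exists>N. \<forall>n\<ge>N. (lamD - 1/real (Suc k)) * real n \<le> (\<Sum>t<n. ED t \<omega>)"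
    unfolding AE_all_countable by (intro allI ergodic_lower[OF P stD ergD intD]) (simp add: eD)
  have AEconv: "AE \<omega> in M. (\<lambda>n. h n \<omega>) \<longlonglongrightarrow> r"
    using AES AED AE_space
  proof eventually_elim
    fix \<omega> assume S: "\<forall>k::nat. \<exists>N. \<forall>n\<ge>N. (lamS - 1/real (Suc k)) * real n \<le> (\<Sum>t<n. ES t \<omega>)"
      and D: "\<forall>k::nat. \<exists>N. \<forall>n\<ge>N. (lamD - 1/real (Suc k)) * real n \<le> (\<Sum>t<n. ED t \<omega>)"
      and om: "\<omega> \<in> space M"
    show "(\<lambda>n. h n \<omega>) \<longlonglongrightarrow> r"
      unfolding tendsto_iff
    proof (intro allI impI)
      fix \<epsilon> :: real assume ep: "\<epsilon> > 0"
      define \<rho> where "\<rho> = max 0 (r - \<epsilon>/2)"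
      have rho: "0 \<le> \<rho>" "\<rho> < r" "\<rho> \<le> 1" "r - \<epsilon>/2 \<le> \<rho>" unfolding \<rho>_def using r0 r1 ep by auto
      have "\<rho> < lamS / PS" using rho r1 by linarith
      then have gS: "\<rho> * PS < lamS" using PS by (simp add: field_simps)
      have "\<rho> < lamD / PD" using rho r1 by linarith
      then have gD: "\<rho> * PD < lamD" using PD by (simp add: field_simps)
      obtain kS where kS: "inverse (real (Suc kS)) < lamS - \<rho> * PS" using reals_Archimedean[of "lamS - \<rho> * PS"] gS by auto
      obtain kD where kD: "inverse (real (Suc kD)) < lamD - \<rho> * PD" using reals_Archimedean[of "lamD - \<rho> * PD"] gD by auto
      obtain N1 where N1: "\<forall>n\<ge>N1. (lamS - 1/real (Suc kS)) * real n \<le> (\<Sum>t<n. ES t \<omega>)" using S by blast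
      obtain N2 where N2: "\<forall>n\<ge>N2. (lamD - 1/real (Suc kD)) * real n \<le> (\<Sum>t<n. ED t \<omega>)" using D by blast
      define T where "T = max N1 N2"
      have Te: "\<forall>t\<ge>T. \<rho> * PS * real t \<le> (\<Sum>s<t. ES s \<omega>)"
      proof (intro allI impI)
        fix t assume "t \<ge> T"
        then have "(lamS - 1/real (Suc kS)) * real t \<le> (\<Sum>s<t. ES s \<omega>)" using N1 unfolding T_def by auto
        moreover have "\<rho> * PS * real t \<le> (lamS - 1/real (Suc kS)) * real t"
          using kS by (intro mult_right_mono) (auto simp: inverse_eq_divide)
        ultimately show "\<rho> * PS * real t \<le> (\<Sum>s<t. ES s \<omega>)" by linarith
      qed
      have Td: "\<forall>t\<ge>T. \<rho> * PD * real t \<le> (\<Sum>s<t. ED s \<omega>)"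
      proof (intro allI impI)
        fix t assume "t \<ge> T"
        then have "(lamD - 1/real (Suc kD)) * real t \<le> (\<Sum>s<t. ED s \<omega>)" using N2 unfolding T_def by auto
        moreover have "\<rho> * PD * real t \<le> (lamD - 1/real (Suc kD)) * real t"
          using kD by (intro mult_right_mono) (auto simp: inverse_eq_divide)
        ultimately show "\<rho> * PD * real t \<le> (\<Sum>s<t. ED s \<omega>)" by linarith
      qed
      define C where "C = 1 + \<rho> * real (Suc T)"
      have C0: "C > 0" unfolding C_def using rho by (simp add: add_pos_nonneg)
      have low: "\<rho> * real n - C \<le> (\<Sum>t<n. act \<omega> t)" for n
        unfolding act_def C_def
        by (rule det_lower[OF PS PD rho(1) rho(3)]) (use Te Td in auto)
      obtain N3 :: nat where N3: "2 * C / \<epsilon> < real N3" using reals_Archimedean2 by blast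
      show "\<forall>\<^sub>F n in sequentially. dist (h n \<omega>) r < \<epsilon>"
        unfolding eventually_sequentially
      proof (intro exI[of _ "Suc N3"] allI impI)
        fix n assume n: "Suc N3 \<le> n"
        have np: "real n > 0" using n by simp
        have "2 * C / \<epsilon> < real n" using N3 n by linarith
        then have Cn: "C / real n < \<epsilon> / 2" using np ep by (simp add: field_simps)
        have "\<rho> - C / real n \<le> (\<Sum>t<n. act \<omega> t) / real n"
        proof -
          have "(\<rho> * real n - C) / real n \<le> (\<Sum>t<n. act \<omega> t) / real n"
            by (rule divide_right_mono[OF low[of n]]) simp
          moreover have "(\<rho> * real n - C) / real n = \<rho> - C / real n" using np by (simp add: field_simps)
          ultimately show ?thesis by simp
        qed
        then have "r - \<epsilon> < (\<Sum>t<n. act \<omega> t) / real n" using Cn rho by linarith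
        then have "r - \<epsilon> < h n \<omega>" unfolding h_def using ep by simp
        then show "dist (h n \<omega>) r < \<epsilon>" using hb[of n \<omega>] by (simp add: dist_real_def)
      qed
    qed
  qed
  have Lh: "(\<lambda>n. integral\<^sup>L M (h n)) \<longlonglongrightarrow> integral\<^sup>L M (\<lambda>\<omega>. r)"
  proof (rule integral_dominated_convergence[where w = "\<lambda>\<omega>. r"])
    show "(\<lambda>\<omega>. r) \<in> borel_measurable M" by simp
    show "\<And>n. h n \<in> borel_measurable M" by measurable
    show "integrable M (\<lambda>\<omega>. r)" by simp
    show "AE \<omega> in M. (\<lambda>n. h n \<omega>) \<longlonglongrightarrow> r" by (rule AEconv)
    show "\<And>n. AE \<omega> in M. norm (h n \<omega>) \<le> r" using hb by auto
  qed
  then have Lh': "(\<lambda>n. integral\<^sup>L M (h n)) \<longlonglongrightarrow> r" by (simp add: prob_space)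
  have Lo: "integral\<^sup>L M (h n) \<le> (\<Sum>t<n. \<integral>\<omega>. act \<omega> t \<partial>M) / real n" for n
  proof -
    have "integral\<^sup>L M (h n) \<le> (\<integral>\<omega>. (\<Sum>t<n. act \<omega> t) / real n \<partial>M)"
      by (rule integral_mono[OF hint]) (auto simp: h_def intro!: integrable_divide Nint)
    also have "\<dots> = (\<Sum>t<n. \<integral>\<omega>. act \<omega> t \<partial>M) / real n" unfolding avg_eq by simp
    finally show ?thesis .
  qed
  have "(\<lambda>n. (\<Sum>t<n. \<integral>\<omega>. act \<omega> t \<partial>M) / real n) \<longlonglongrightarrow> r"
    by (rule tendsto_sandwich[OF _ _ Lh' tendsto_const]) (use Lo U in auto)
  then show ?thesis unfolding act_def r_def .
qed

end
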